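(* Let $2\leq r\leq n$ be integers and $(s_2,\ldots,s_r)\in\mathbb{N}^{r-1}$. Then there exists an integer $N$ (depending on $n$ and $(s_2,\ldots,s_r)$) such that $\overline{H}_n(s_1,s_2,\ldots,s_r)$ is not an integer for every positive integer $s_1>N$.
   Context: $\mathbb{N}$ is the set of positive integers and $\overline{H}_n(s_1,\ldots,s_r)=\sum_{0\leq k_1<\cdots<k_r\leq n-1}\prod_{j=1}^r (2k_j+1)^{-s_j}$. *)

theory Defs
  imports Complex_Main
begin

definition idx_tuples :: "nat \<Rightarrow> nat \<Rightarrow> nat list set" where
  "idx_tuples n r = {ks. length ks = r \<and> sorted_wrt (<) ks \<and> (\<forall>k\<in>set ks. k < n)}"

definition Hbar :: "nat \<Rightarrow> nat list \<Rightarrow> real" where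
  "Hbar n ss = (\<Sum>ks\<in>idx_tuples n (length ss).
      \<Prod>j<length ss. 1 / (2 * real (ks ! j) + 1) ^ (ss ! j))"

end

theory Submission
  imports Defs
begin

lemma not_int_between:
  fixes x :: real and m :: int
  assumes "m < x" "x < m + 1"
  shows "x \<notin> \<int>"
proof
  assume "x \<in> \<int>"
  then obtain k where k: "x = of_int k" by (auto elim: Ints_cases)
  with assms have "m < k" "k < m + 1" by simp_all
  then show False by linarith
qed

theorem lemma2p8:
  fixes n r :: nat and ts :: "nat list"
  assumes "2 \<le> r" and "r \<le> n"
    and "length ts = r - 1"
    and "\<forall>t\<in>set ts. t \<ge> 1"
  shows "\<exists>N::nat. \<forall>s1::nat. s1 > N \<longrightarrow> Hbar n (s1 # ts) \<notin> \<int>"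
proof -
  define T where "T = idx_tuples n r"
  have finT: "finite T"
  proof -
    have "T \<subseteq> {xs. set xs \<subseteq> {..<n} \<and> length xs = r}" unfolding T_def idx_tuples_def by auto
    thus ?thesis by (rule finite_subset) (simp add: finite_lists_length_eq)
  qed
  have rS: "r = Suc (length ts)" using assms by simp
  define P where "P ks = (\<Prod>i<length ts. 1 / (2 * real (ks ! Suc i) + 1) ^ (ts ! i))" for ks
  define c where "c ks = 1 / (2 * real (ks ! 0) + 1)" for ks :: "nat list"
  have Hform: "Hbar n (s1 # ts) = (\<Sum>ks\<in>T. c ks ^ s1 * P ks)" for s1
  proof -
    have "Hbar n (s1 # ts) = (\<Sum>ks\<in>T. \<Prod>j<r. 1 / (2 * real (ks ! j) + 1) ^ ((s1 # ts) ! j))"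
      unfolding Hbar_def T_def using rS by simp
    also have "\<dots> = (\<Sum>ks\<in>T. c ks ^ s1 * P ks)"
      by (rule sum.cong[OF refl]) (simp only: rS prod.lessThan_Suc_shift, simp add: c_def P_def power_one_over)
    finally show ?thesis .
  qed
  have Ppos: "P ks > 0" for ks unfolding P_def by (intro prod_pos) auto
  have Ple1: "P ks \<le> 1" for ks unfolding P_def
    by (intro prod_le_1) (auto simp: divide_simps)
  have cpos: "c ks > 0" for ks unfolding c_def by auto
  show ?thesis
  proof (cases "r = n")
    case True
    have TT: "T = {[0..<n]}"
    proof
      show "{[0..<n]} \<subseteq> T" unfolding T_def idx_tuples_def using True by auto
      show "T \<subseteq> {[0..<n]}"
      proof
        fix ks assume "ks \<in> T"
        hence ks: "length ks = n" "sorted ks" "distinct ks" "set ks \<subseteq> {..<n}"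
          unfolding T_def idx_tuples_def strict_sorted_iff using True by auto
        have "card (set ks) = n" using ks(1,3) by (simp add: distinct_card)
        hence "card (set ks) = card {..<n}" by simp
        hence "set ks = {..<n}"
          using card_subset_eq[OF finite_lessThan ks(4)] by blast
        hence "set ks = set [0..<n]" by (simp add: lessThan_atLeast0)
        moreover have "sorted [0..<n]" "distinct [0..<n]" by simp_all
        ultimately show "ks \<in> {[0..<n]}" using ks(2,3) sorted_distinct_set_unique by blast
      qed
    qed
    obtain m where m: "length ts = Suc m" using rS assms(1) by (cases "length ts") auto
    have t0: "ts ! 0 \<ge> 1" using assms(4) m by (metis nth_mem zero_less_Suc)
    have n0: "n > 0" "[0..<n] ! 0 = 0" using True assms by auto
    define Q where "Q = (\<Prod>i<m. 1 / (2 * real ([0..<n] ! Suc (Suc i)) + 1) ^ (ts ! Suc i))"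
    have Qle: "Q \<le> 1" unfolding Q_def by (intro prod_le_1) (auto simp: divide_simps)
    have Qge: "Q \<ge> 0" unfolding Q_def by (intro prod_nonneg) auto
    have "[0..<n] ! Suc 0 = 1" using True assms by simp
    moreover have "P [0..<n] = (1 / (2 * real ([0..<n] ! Suc 0) + 1) ^ (ts ! 0)) * Q"
      unfolding P_def Q_def m by (rule prod.lessThan_Suc_shift)
    ultimately have Pv: "P [0..<n] = 1 / 3 ^ (ts ! 0) * Q" by simp
    have "(3::real) ^ 1 \<le> 3 ^ (ts ! 0)" using t0 by (intro power_increasing) auto
    hence "1 / 3 ^ (ts ! 0) \<le> (1/3::real)" by (simp add: divide_simps)
    hence "P [0..<n] \<le> 1/3 * 1" unfolding Pv using Qle Qge
      by (intro mult_mono) auto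
    hence Plt: "P [0..<n] < 1" by simp
    show ?thesis
    proof (intro exI allI impI)
      fix s1 :: nat
      have c1: "c [0..<n] = 1" unfolding c_def using n0(2) by simp
      have "Hbar n (s1 # ts) = c [0..<n] ^ s1 * P [0..<n]" unfolding Hform TT by simp
      also have "\<dots> = P [0..<n]" using c1 by simp
      finally have "Hbar n (s1 # ts) = P [0..<n]" .
      thus "Hbar n (s1 # ts) \<notin> \<int>"
        using not_int_between[of 0 "P [0..<n]"] Ppos Plt by simp
    qed
  next
    case False
    hence rn: "r < n" using assms by simp
    define T0 where "T0 = {ks\<in>T. ks ! 0 = 0}"
    define T1 where "T1 = {ks\<in>T. ks ! 0 \<noteq> 0}"
    have w: "[1..<r+1] \<in> T1" unfolding T1_def T_def idx_tuples_def using rn assms(1)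
      by (auto simp del: upt_Suc simp: sorted_wrt_upt)
    have fin0: "finite T0" "finite T1" unfolding T0_def T1_def using finT by auto
    define A where "A = (\<Sum>ks\<in>T0. P ks)"
    define E where "E s1 = (\<Sum>ks\<in>T1. c ks ^ s1 * P ks)" for s1 :: nat
    have HAE: "Hbar n (s1 # ts) = A + E s1" for s1
    proof -
      have TU: "T = T0 \<union> T1" unfolding T0_def T1_def by auto
      have dj: "T0 \<inter> T1 = {}" unfolding T0_def T1_def by auto
      have "Hbar n (s1 # ts) = (\<Sum>ks\<in>T0 \<union> T1. c ks ^ s1 * P ks)"
        unfolding Hform using TU by simp
      also have "\<dots> = (\<Sum>ks\<in>T0. c ks ^ s1 * P ks) + E s1"
        unfolding E_def by (rule sum.union_disjoint[OF fin0 dj])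
      finally have "Hbar n (s1 # ts) = (\<Sum>ks\<in>T0. c ks ^ s1 * P ks) + E s1" .
      also have "(\<Sum>ks\<in>T0. c ks ^ s1 * P ks) = A"
        unfolding A_def by (rule sum.cong) (auto simp: T0_def c_def)
      finally show ?thesis .
    qed
    have Epos: "E s1 > 0" for s1 unfolding E_def
      using fin0 w by (intro sum_pos) (auto intro!: mult_pos_pos Ppos cpos zero_less_power)
    define M where "M = card T1"
    have Ebound: "E s1 \<le> real M * (1/3) ^ s1" for s1
    proof -
      have "c ks ^ s1 * P ks \<le> (1/3) ^ s1" if "ks \<in> T1" for ks
      proof -
        have "ks ! 0 \<ge> 1" using that unfolding T1_def by auto
        hence "c ks \<le> 1/3" unfolding c_def by (simp add: divide_simps)
        hence "c ks ^ s1 \<le> (1/3) ^ s1" using cpos[of ks] by (intro power_mono) auto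
        hence "c ks ^ s1 * P ks \<le> (1/3) ^ s1 * 1"
          using Ple1[of ks] Ppos[of ks] by (intro mult_mono) auto
        thus ?thesis by simp
      qed
      thus ?thesis unfolding E_def M_def by (intro sum_bounded_above) auto
    qed
    define f where "f = A - of_int (floor A)"
    have f1: "1 - f > 0" unfolding f_def by linarith
    obtain N where N: "(1/3::real) ^ N < (1 - f) / (real M + 1)"
      using real_arch_pow_inv[of "(1 - f) / (real M + 1)" "1/3::real"] f1 by auto
    show ?thesis
    proof (intro exI allI impI)
      fix s1 :: nat assume "s1 > N"
      hence "(1/3::real) ^ s1 \<le> (1/3) ^ N" by (intro power_decreasing) auto
      hence "real M * (1/3) ^ s1 \<le> (real M + 1) * (1/3::real) ^ N"
        by (intro mult_mono) auto
      also have "\<dots> < 1 - f" using N by (simp add: field_simps)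
      finally have "E s1 < 1 - f" using Ebound[of s1] by linarith
      moreover have "of_int (floor A) \<le> A" by simp
      ultimately show "Hbar n (s1 # ts) \<notin> \<int>"
        unfolding HAE using Epos[of s1] f_def
        by (intro not_int_between[of "floor A"]) linarith+
    qed
  qed
qed

end
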